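(* For every analytic set $S\subseteq(0;1)$ there is a solid closed set $A\subseteq 2^{\omega}$ such that $\operatorname{ran}\mathcal{D}_A=\{0,1\}\cup S$, and there is also a solid open set $A'\subseteq 2^{\omega}$ such that $\operatorname{ran}\mathcal{D}_{A'}=\{0,1\}\cup S$.
   Context: $2^{\omega}$ is the Cantor space of infinite binary sequences with the product topology; for a finite binary sequence $s$ let $N_s=\{x\in 2^\omega: s\subset x\}$. $\mu$ is the coin-tossing probability measure on $2^\omega$, i.e. the unique Borel probability measure with $\mu(N_s)=2^{-\mathrm{lh}(s)}$. For a measurable $A\subseteq 2^\omega$ and $z\in 2^\omega$, the density of $A$ at $z$ is $\mathcal{D}_A(z)=\lim_{n\to\infty}\mu(A\cap N_{z\restriction n})/\mu(N_{z\restriction n})$, defined only when the limit exists; $\operatorname{ran}\mathcal{D}_A$ is the set of values $\mathcal{D}_A(z)$ over all $z$ at which the limit exists. A point $z$ is blurry for $A$ if $\mathcal{D}_A(z)$ does not exist. $A$ is solid if no point of $2^\omega$ is blurry for $A$. *)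

theory Defs
  imports "HOL-Analysis.Analysis" "HOL-Probability.Probability"
begin

definition cantor_top :: "(nat \<Rightarrow> bool) topology" where
  "cantor_top = product_topology (\<lambda>_. discrete_topology (UNIV :: bool set)) UNIV"

definition coin :: "(nat \<Rightarrow> bool) measure" where
  "coin = PiM UNIV (\<lambda>_. measure_pmf (bernoulli_pmf (1/2)))"

definition cyl :: "(nat \<Rightarrow> bool) \<Rightarrow> nat \<Rightarrow> (nat \<Rightarrow> bool) set" where
  "cyl z n = {x. \<forall>i<n. x i = z i}"

definition dens_seq :: "(nat \<Rightarrow> bool) set \<Rightarrow> (nat \<Rightarrow> bool) \<Rightarrow> nat \<Rightarrow> real" where
  "dens_seq A z n = measure coin (A \<inter> cyl z n) / measure coin (cyl z n)"

definition has_density :: "(nat \<Rightarrow> bool) set \<Rightarrow> (nat \<Rightarrow> bool) \<Rightarrow> real \<Rightarrow> bool" where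
  "has_density A z d \<longleftrightarrow> dens_seq A z \<longlonglongrightarrow> d"

definition ran_density :: "(nat \<Rightarrow> bool) set \<Rightarrow> real set" where
  "ran_density A = {d. \<exists>z. has_density A z d}"

definition blurry :: "(nat \<Rightarrow> bool) set \<Rightarrow> (nat \<Rightarrow> bool) \<Rightarrow> bool" where
  "blurry A z \<longleftrightarrow> \<not> (\<exists>d. has_density A z d)"

definition solid :: "(nat \<Rightarrow> bool) set \<Rightarrow> bool" where
  "solid A \<longleftrightarrow> (\<forall>z. \<not> blurry A z)"

definition analytic_real :: "real set \<Rightarrow> bool" where
  "analytic_real S \<longleftrightarrow> S = {} \<or> (\<exists>f :: (nat \<Rightarrow> nat) \<Rightarrow> real. continuous_on UNIV f \<and> range f = S)"

end

theory Submission
  imports Defs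
begin


section \<open>Measure basics\<close>

definition pre :: "(nat \<Rightarrow> bool) \<Rightarrow> nat \<Rightarrow> bool list" where
  "pre x n = map x [0..<n]"
definition cylL :: "bool list \<Rightarrow> (nat \<Rightarrow> bool) set" where
  "cylL u = {x. \<forall>i<length u. x i = u!i}"

abbreviation "BM \<equiv> (\<lambda>_::nat. measure_pmf (bernoulli_pmf (1/2)))"

interpretation coinP: product_prob_space BM UNIV
  by unfold_locales

lemma coin_prob: "prob_space coin"
  unfolding coin_def by (rule coinP.P.prob_space_axioms)

interpretation coinPS: prob_space coin by (rule coin_prob)

lemma space_coin[simp]: "space coin = UNIV"
  unfolding coin_def by (simp add: space_PiM)

lemma cylL_emb: "cylL u = prod_emb UNIV BM {..<length u} (PiE {..<length u} (\<lambda>i. {u!i}))"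
proof -
  have "prod_emb UNIV BM {..<length u} (PiE {..<length u} (\<lambda>i. {u!i})) = (PiE UNIV (\<lambda>i. if i \<in> {..<length u} then {u!i} else space (BM i)))"
    by (rule prod_emb_PiE) auto
  also have "\<dots> = (PiE UNIV (\<lambda>i. if i \<in> {..<length u} then {u!i} else UNIV))"
    by (intro PiE_cong) (simp add: space_measure_pmf)
  also have "\<dots> = cylL u"
  proof (rule set_eqI)
    fix x :: "nat \<Rightarrow> bool"
    have "x \<in> (PiE UNIV (\<lambda>i. if i \<in> {..<length u} then {u!i} else UNIV)) \<longleftrightarrow>
        (\<forall>i. x i \<in> (if i \<in> {..<length u} then {u!i} else UNIV))" by (simp add: PiE_iff)
    also have "\<dots> \<longleftrightarrow> (\<forall>i<length u. x i = u!i)"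
    proof
      assume h: "\<forall>i. x i \<in> (if i \<in> {..<length u} then {u!i} else UNIV)"
      show "\<forall>i<length u. x i = u!i"
      proof (intro allI impI)
        fix i assume "i < length u"
        then show "x i = u!i" using h[rule_format, of i] by simp
      qed
    qed auto
    finally show "x \<in> (PiE UNIV (\<lambda>i. if i \<in> {..<length u} then {u!i} else UNIV)) \<longleftrightarrow> x \<in> cylL u"
      by (simp add: cylL_def)
  qed
  finally show ?thesis by simp
qed

lemma cylL_sets[measurable]: "cylL u \<in> sets coin"
  unfolding cylL_emb coin_def
  by (rule sets_PiM_I) auto

lemma emeasure_cylL: "emeasure coin (cylL u) = ennreal ((1/2)^length u)"
proof -
  have "emeasure coin (cylL u) = (\<Prod>i<length u. emeasure (BM i) {u!i})"
    unfolding cylL_emb coin_def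
    by (rule coinP.emeasure_PiM_emb) auto
  also have "\<dots> = (\<Prod>i<length u. ennreal (1/2))"
    by (rule prod.cong) (auto simp: emeasure_pmf_single)
  also have "\<dots> = ennreal ((1/2)^length u)"
    by (subst prod_ennreal) auto
  finally show ?thesis .
qed

lemma measure_cylL: "measure coin (cylL u) = (1/2)^length u"
  unfolding measure_def emeasure_cylL by simp

lemma length_pre[simp]: "length (pre x n) = n" by (simp add: pre_def)
lemma pre_Suc: "pre x (Suc n) = pre x n @ [x n]" by (simp add: pre_def)
lemma nth_pre[simp]: "i < n \<Longrightarrow> pre x n ! i = x i" by (simp add: pre_def)
lemma cylL_pre: "x \<in> cylL u \<longleftrightarrow> pre x (length u) = u"
proof -
  have "pre x (length u) = u \<longleftrightarrow> (\<forall>i<length u. pre x (length u) ! i = u ! i)"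
    by (simp only: list_eq_iff_nth_eq length_pre simp_thms)
  also have "\<dots> \<longleftrightarrow> (\<forall>i<length u. x i = u ! i)" by simp
  finally show ?thesis unfolding cylL_def by simp
qed
lemma cylL_pre_self: "x \<in> cylL (pre x n)"
  by (simp add: cylL_pre)
lemma cyl_eq: "cyl z n = cylL (pre z n)" unfolding cyl_def cylL_def by auto
lemma cylL_snoc: "x \<in> cylL (u@[b]) \<longleftrightarrow> x \<in> cylL u \<and> x (length u) = b"
  unfolding cylL_def by (auto simp: nth_append less_Suc_eq)
lemma take_pre: "n \<le> m \<Longrightarrow> take n (pre x m) = pre x n"
  by (simp add: pre_def take_map min_def)
lemma pre_add: "pre x (m + d) = pre x m @ map x [m..<m+d]"
  unfolding pre_def upt_add_eq_append[OF le0] by simp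

definition mm :: "(nat\<Rightarrow>bool) set \<Rightarrow> bool list \<Rightarrow> real" where
  "mm A u = measure coin (A \<inter> cylL u) * 2^length u"

lemma mm_rec: assumes "A \<in> sets coin"
  shows "mm A u = (mm A (u@[False]) + mm A (u@[True]))/2"
proof -
  have e: "A \<inter> cylL u = (A \<inter> cylL (u@[False])) \<union> (A \<inter> cylL (u@[True]))"
    by (auto simp: cylL_snoc)
  have d: "(A \<inter> cylL (u@[False])) \<inter> (A \<inter> cylL (u@[True])) = {}" by (auto simp: cylL_snoc)
  have "measure coin (A \<inter> cylL u) = measure coin ((A \<inter> cylL (u@[False])) \<union> (A \<inter> cylL (u@[True])))"
    by (rule arg_cong[where f="measure coin", OF e])
  also have "\<dots> = measure coin (A \<inter> cylL (u@[False])) + measure coin (A \<inter> cylL (u@[True]))"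
    using assms d by (intro coinPS.finite_measure_Union) auto
  finally show ?thesis unfolding mm_def by (simp add: field_simps)
qed

lemma mm_ge0: "0 \<le> mm A u" unfolding mm_def by simp

lemma mm_le1: "mm A u \<le> 1"
proof -
  have "measure coin (A \<inter> cylL u) \<le> measure coin (cylL u)"
    by (rule coinPS.finite_measure_mono) auto
  then have "mm A u \<le> (1/2)^length u * 2^length u"
    unfolding mm_def measure_cylL by (intro mult_right_mono) auto
  also have "\<dots> = 1" by (simp add: power_mult_distrib[symmetric])
  finally show ?thesis .
qed

lemma mm_full: "cylL u \<subseteq> A \<Longrightarrow> mm A u = 1"
proof -
  assume "cylL u \<subseteq> A"
  then have "A \<inter> cylL u = cylL u" by auto
  then show ?thesis unfolding mm_def by (simp add: measure_cylL power_mult_distrib[symmetric])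
qed

lemma mm_empty: "A \<inter> cylL u = {} \<Longrightarrow> mm A u = 0"
  unfolding mm_def by simp

lemma dens_mm: "dens_seq A z n = mm A (pre z n)"
  unfolding dens_seq_def mm_def cyl_eq measure_cylL by (simp add: field_simps)

lemma pre_set_eq: "{x. P (pre x n)} = (\<Union>u\<in>{u. length u = n \<and> P u}. cylL u)"
  by (auto simp: cylL_pre)

lemma pre_sets: "{x. P (pre x n)} \<in> sets coin"
proof -
  have "finite {u::bool list. length u = n \<and> P u}"
    by (rule finite_subset[OF _ finite_lists_length_eq[of "UNIV::bool set" n]]) auto
  then show ?thesis unfolding pre_set_eq by (intro sets.finite_UN) auto
qed

lemma topspace_cantor[simp]: "topspace cantor_top = UNIV"
  unfolding cantor_top_def by (auto simp: PiE_iff)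

lemma open_coord: "openin cantor_top {x. x i = b}"
proof -
  have "openin cantor_top {x \<in> topspace cantor_top. x i \<in> {b}}"
    unfolding cantor_top_def
    by (rule openin_continuous_map_preimage[OF continuous_map_product_projection]) auto
  then show ?thesis by simp
qed

lemma open_cylL: "openin cantor_top (cylL u)"
proof (induction u rule: rev_induct)
  case Nil
  then show ?case using openin_topspace[of cantor_top] by (simp add: cylL_def)
next
  case (snoc b u)
  have "cylL (u@[b]) = cylL u \<inter> {x. x (length u) = b}" by (auto simp: cylL_snoc)
  then show ?case using snoc open_coord by (simp add: openin_Int)
qed

section \<open>The automaton\<close>

datatype st = Init | Run "nat list" nat | Pad "nat list" nat nat | Off nat nat

definition Lp :: "nat list \<Rightarrow> nat \<Rightarrow> nat" where "Lp t j = length t + j + 1"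
lemma Lp_pos[simp]: "0 < Lp t j" by (simp add: Lp_def)

definition qp :: "(nat list \<Rightarrow> real) \<Rightarrow> nat list \<Rightarrow> nat \<Rightarrow> nat" where
  "qp a t j = nat \<lfloor>a t * 2^Lp t j\<rfloor>"
definition qv :: "(nat list \<Rightarrow> real) \<Rightarrow> nat list \<Rightarrow> nat \<Rightarrow> real" where
  "qv a t j = real (qp a t j) / 2^Lp t j"

fun step :: "(nat list \<Rightarrow> real) \<Rightarrow> st \<Rightarrow> bool \<Rightarrow> st" where
  "step a Init b = (if b then Off 1 1 else Run [] 0)"
| "step a (Run t i) b = (if b then Pad t i 0 else Run t (Suc i))"
| "step a (Pad t j k) b = (if b then Off (qp a t j) (Lp t j)
      else if Suc k = Lp t j then Run (t@[j]) 0 else Pad t j (Suc k))"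
| "step a (Off p 0) b = Off p 0"
| "step a (Off p (Suc k)) b = (if b then Off (p - min p (2^k)) k else Off (min p (2^k)) k)"

definition parse :: "(nat list \<Rightarrow> real) \<Rightarrow> bool list \<Rightarrow> st" where
  "parse a u = foldl (step a) Init u"

lemma parse_snoc[simp]: "parse a (u@[b]) = step a (parse a u) b" by (simp add: parse_def)
lemma parse_append: "parse a (u@w) = foldl (step a) (parse a u) w" by (simp add: parse_def)
lemma foldl_off0: "foldl (step a) (Off p 0) w = Off p 0" by (induction w) auto
lemma parse_pre_Suc: "parse a (pre z (Suc n)) = step a (parse a (pre z n)) (z n)"
  by (simp add: pre_Suc)

definition AS :: "(nat list \<Rightarrow> real) \<Rightarrow> (nat\<Rightarrow>bool) set" where
  "AS a = {x. \<exists>n. parse a (pre x n) = Off 1 0}"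

lemma AS_sets[measurable]: "AS a \<in> sets coin"
proof -
  have "AS a = (\<Union>n. {x. parse a (pre x n) = Off 1 0})" by (auto simp: AS_def)
  also have "\<dots> \<in> sets coin" by (intro sets.countable_UN) (auto intro: pre_sets)
  finally show ?thesis .
qed

lemma AS_open: "openin cantor_top (AS a)"
proof -
  have "AS a = \<Union> (cylL ` {u. parse a u = Off 1 0})"
  proof (rule set_eqI)
    fix x
    show "x \<in> AS a \<longleftrightarrow> x \<in> \<Union> (cylL ` {u. parse a u = Off 1 0})"
    proof
      assume "x \<in> AS a"
      then obtain n where "parse a (pre x n) = Off 1 0" by (auto simp: AS_def)
      then show "x \<in> \<Union> (cylL ` {u. parse a u = Off 1 0})" using cylL_pre_self[of x n] by blast
    next
      assume "x \<in> \<Union> (cylL ` {u. parse a u = Off 1 0})"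
      then obtain u where "parse a u = Off 1 0" "x \<in> cylL u" by blast
      then have "parse a (pre x (length u)) = Off 1 0" by (simp add: cylL_pre)
      then show "x \<in> AS a" unfolding AS_def by blast
    qed
  qed
  then show ?thesis by (auto intro!: openin_Union open_cylL)
qed

fun good_st :: "st \<Rightarrow> bool" where
  "good_st (Pad t j k) = (k < Lp t j)"
| "good_st (Off p k) = (p \<le> 2^k)"
| "good_st _ = True"

fun isOff :: "st \<Rightarrow> bool" where
  "isOff (Off p k) = True" | "isOff _ = False"

fun dg :: "st \<Rightarrow> nat list" where
  "dg (Run t i) = t" | "dg (Pad t j k) = t" | "dg _ = []"

lemma step_isOff: "isOff s \<Longrightarrow> isOff (step a s b)"
  by (cases s rule: isOff.cases) (auto, case_tac k, auto)

lemma dg_step: "\<not> isOff (step a s b) \<Longrightarrow> \<exists>w. dg (step a s b) = dg s @ w"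
  by (cases "(a,s,b)" rule: step.cases) auto

lemma step_not_Init: "step a s b \<noteq> Init"
  by (cases "(a,s,b)" rule: step.cases) auto

lemma avg_bound:
  fixes x y c e1 e2 :: real
  assumes "\<bar>x - c\<bar> \<le> e1" "\<bar>y - c\<bar> \<le> e2"
  shows "\<bar>(x + y)/2 - c\<bar> \<le> (e1 + e2)/2"
  using assms by (auto simp: abs_le_iff field_simps)

lemma abs01: "0 \<le> (x::real) \<Longrightarrow> x \<le> 1 \<Longrightarrow> 0 \<le> c \<Longrightarrow> c \<le> 1 \<Longrightarrow> \<bar>x - c\<bar> \<le> 1"
  by (auto simp: abs_le_iff)

locale cons =
  fixes a :: "nat list \<Rightarrow> real"
  assumes a0: "\<And>t. 0 \<le> a t" and a1: "\<And>t. a t \<le> 1"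
begin

lemma qp_le: "qp a t j \<le> 2^Lp t j"
proof -
  have "a t * 2^Lp t j \<le> 1 * 2^Lp t j" by (intro mult_right_mono a1) auto
  moreover have "of_int ((2::int)^Lp t j) = (2::real)^Lp t j" by simp
  ultimately have "a t * 2^Lp t j < of_int ((2::int)^Lp t j) + 1" by linarith
  then have "\<lfloor>a t * 2^Lp t j\<rfloor> \<le> 2^Lp t j" by (simp only: floor_le_iff)
  then show ?thesis unfolding qp_def by (simp add: nat_le_iff)
qed

lemma qv_bounds: "a t - 1/2^Lp t j \<le> qv a t j" "qv a t j \<le> a t"
proof -
  let ?y = "a t * 2^Lp t j"
  have y0: "0 \<le> ?y" using a0 by simp
  have r: "real (qp a t j) = of_int \<lfloor>?y\<rfloor>" unfolding qp_def using y0 by simp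
  have f1: "of_int \<lfloor>?y\<rfloor> \<le> ?y" by simp
  have f2: "?y - 1 < of_int \<lfloor>?y\<rfloor>" by linarith
  have "of_int \<lfloor>?y\<rfloor> / 2^Lp t j \<le> ?y / 2^Lp t j" using f1 by (intro divide_right_mono) auto
  then show "qv a t j \<le> a t" unfolding qv_def r by simp
  have "a t - 1/2^Lp t j = (?y - 1) / 2^Lp t j" by (simp add: field_simps)
  also have "\<dots> \<le> of_int \<lfloor>?y\<rfloor> / 2^Lp t j" using f2 by (intro divide_right_mono) auto
  finally show "a t - 1/2^Lp t j \<le> qv a t j" unfolding qv_def r .
qed

lemma qv_err: "\<bar>qv a t j - a t\<bar> \<le> 1/2^Lp t j"
  using qv_bounds[of t j] by (auto simp: abs_le_iff)

lemma good_step: "good_st s \<Longrightarrow> good_st (step a s b)"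
  by (cases "(a,s,b)" rule: step.cases) (auto simp: qp_le min_def)

lemma good_parse: "good_st (parse a u)"
  by (induction u rule: rev_induct) (auto simp: parse_def good_step)

lemma mm_off: "parse a u = Off p k \<Longrightarrow> mm (AS a) u = p / 2^k"
proof (induction k arbitrary: u p)
  case 0
  have "p \<le> 1" using good_parse[of u] 0 by simp
  then consider "p = 0" | "p = 1" by linarith
  then show ?case
  proof cases
    case 1
    have "AS a \<inter> cylL u = {}"
    proof (rule ccontr)
      assume "AS a \<inter> cylL u \<noteq> {}"
      then obtain x n where x: "x \<in> cylL u" "parse a (pre x n) = Off 1 0" by (auto simp: AS_def)
      have xu: "pre x (length u) = u" using x(1) by (simp add: cylL_pre)
      show False
      proof (cases "n \<le> length u")
        case True
        have "u = pre x n @ drop n u" using xu take_pre[OF True, of x]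
          by (metis append_take_drop_id)
        then have "parse a u = Off 1 0" using x(2) by (metis parse_append foldl_off0)
        then show False using 0 1 by simp
      next
        case False
        then obtain d where "n = length u + d" by (metis le_add_diff_inverse nat_le_linear)
        then have "pre x n = u @ map x [length u..<length u + d]" using xu by (simp add: pre_add)
        then have "parse a (pre x n) = Off 0 0" using 0 1 by (simp add: parse_append foldl_off0)
        then show False using x(2) by simp
      qed
    qed
    then show ?thesis using 1 by (simp add: mm_empty)
  next
    case 2
    have "cylL u \<subseteq> AS a"
    proof
      fix x assume "x \<in> cylL u"
      then have "pre x (length u) = u" by (simp add: cylL_pre)
      then have "parse a (pre x (length u)) = Off 1 0" using 0 2 by simp
      then show "x \<in> AS a" unfolding AS_def by blast
    qed
    then show ?thesis using 2 by (simp add: mm_full)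
  qed
next
  case (Suc k)
  have g: "p \<le> 2^Suc k" using good_parse[of u] Suc.prems by simp
  have e0: "mm (AS a) (u@[False]) = min p (2^k) / 2^k"
    using Suc.IH[of "u@[False]"] Suc.prems by simp
  have e1: "mm (AS a) (u@[True]) = (p - min p (2^k)) / 2^k"
    using Suc.IH[of "u@[True]"] Suc.prems by simp
  have "real (p - min p (2^k)) = real p - real (min p (2^k))" by (simp add: of_nat_diff)
  then show ?case using mm_rec[OF AS_sets, of a u] e0 e1 by (simp add: field_simps)
qed

lemma mm_in01: "0 \<le> mm (AS a) u" "mm (AS a) u \<le> 1"
  by (simp_all add: mm_ge0 mm_le1)

lemma mm_pad_aux:
  assumes hR: "\<And>v. parse a v = Run (t@[j]) 0 \<Longrightarrow> \<bar>mm (AS a) v - c\<bar> \<le> B + D"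
    and hq: "\<bar>qv a t j - c\<bar> \<le> B" and D: "0 \<le> D"
  shows "Lp t j - k = Suc d \<Longrightarrow> parse a u = Pad t j k \<Longrightarrow> \<bar>mm (AS a) u - c\<bar> \<le> B + D / 2^(Suc d)"
proof (induction d arbitrary: k u)
  case 0
  then have k: "Suc k = Lp t j" by simp
  have e0: "\<bar>mm (AS a) (u@[False]) - c\<bar> \<le> B + D" using hR 0 k by simp
  have "mm (AS a) (u@[True]) = qv a t j" using mm_off[of "u@[True]"] 0 by (simp add: qv_def)
  then have e1: "\<bar>mm (AS a) (u@[True]) - c\<bar> \<le> B" using hq by simp
  have "\<bar>mm (AS a) u - c\<bar> \<le> ((B + D) + B)/2"
    unfolding mm_rec[OF AS_sets, of a u] by (rule avg_bound[OF e0 e1])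
  then show ?case by (simp add: field_simps)
next
  case (Suc d)
  then have k: "Suc k \<noteq> Lp t j" "Lp t j - Suc k = Suc d" by auto
  have e0: "\<bar>mm (AS a) (u@[False]) - c\<bar> \<le> B + D / 2^(Suc d)"
    using Suc.IH[OF k(2)] Suc.prems k by simp
  have "mm (AS a) (u@[True]) = qv a t j" using mm_off[of "u@[True]"] Suc.prems by (simp add: qv_def)
  then have e1: "\<bar>mm (AS a) (u@[True]) - c\<bar> \<le> B" using hq by simp
  have "\<bar>mm (AS a) u - c\<bar> \<le> ((B + D / 2^(Suc d)) + B)/2"
    unfolding mm_rec[OF AS_sets, of a u] by (rule avg_bound[OF e0 e1])
  then show ?case by (simp add: field_simps)
qed

lemma mm_pad:
  assumes "parse a u = Pad t j k"
    and hR: "\<And>v. parse a v = Run (t@[j]) 0 \<Longrightarrow> \<bar>mm (AS a) v - c\<bar> \<le> B + D"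
    and hq: "\<bar>qv a t j - c\<bar> \<le> B" and D: "0 \<le> D"
  shows "\<bar>mm (AS a) u - c\<bar> \<le> B + D / 2^(Lp t j - k)"
proof -
  have "k < Lp t j" using good_parse[of u] assms(1) by simp
  then have e: "Lp t j - k = Suc (Lp t j - k - 1)" by simp
  show ?thesis using mm_pad_aux[OF hR hq D e assms(1)] e by simp
qed

lemma mm_run_aux:
  assumes B: "0 \<le> B" and c: "0 \<le> c" "c \<le> 1"
    and h: "\<And>j v. i0 \<le> j \<Longrightarrow> parse a v = Pad t j 0 \<Longrightarrow> \<bar>mm (AS a) v - c\<bar> \<le> B"
  shows "i0 \<le> i \<Longrightarrow> parse a u = Run t i \<Longrightarrow> \<bar>mm (AS a) u - c\<bar> \<le> B + 1/2^J"
proof (induction J arbitrary: i u)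
  case 0
  have "\<bar>mm (AS a) u - c\<bar> \<le> 1" using abs01[OF mm_in01 c] .
  then show ?case using B by simp
next
  case (Suc J)
  have e0: "\<bar>mm (AS a) (u@[False]) - c\<bar> \<le> B + 1/2^J"
    using Suc.IH[of "Suc i" "u@[False]"] Suc.prems by simp
  have e1: "\<bar>mm (AS a) (u@[True]) - c\<bar> \<le> B"
    using h[of i "u@[True]"] Suc.prems by simp
  have "\<bar>mm (AS a) u - c\<bar> \<le> ((B + 1/2^J) + B)/2"
    unfolding mm_rec[OF AS_sets, of a u] by (rule avg_bound[OF e0 e1])
  then show ?case by (simp add: field_simps)
qed

lemma mm_run:
  assumes B: "0 \<le> B" and c: "0 \<le> c" "c \<le> 1"
    and h: "\<And>j v. i0 \<le> j \<Longrightarrow> parse a v = Pad t j 0 \<Longrightarrow> \<bar>mm (AS a) v - c\<bar> \<le> B"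
    and i: "i0 \<le> i" and u: "parse a u = Run t i"
  shows "\<bar>mm (AS a) u - c\<bar> \<le> B"
proof (rule ccontr)
  assume "\<not> ?thesis"
  then have "0 < \<bar>mm (AS a) u - c\<bar> - B" by simp
  then obtain J where J: "(1/2::real)^J < \<bar>mm (AS a) u - c\<bar> - B"
    using real_arch_pow_inv[of "\<bar>mm (AS a) u - c\<bar> - B" "1/2"] by auto
  have "\<bar>mm (AS a) u - c\<bar> \<le> B + 1/2^J" using mm_run_aux[OF B c h i u] .
  then show False using J by (simp add: power_one_over)
qed

lemma est_pad0: "parse a v = Pad t j 0 \<Longrightarrow> \<bar>mm (AS a) v - a t\<bar> \<le> 1/2^(length t + j)"
proof -
  assume v: "parse a v = Pad t j 0"
  have hR: "\<bar>mm (AS a) w - a t\<bar> \<le> 1/2^Lp t j + 1" for w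
    using abs01[OF mm_in01 a0 a1, of w t] by (simp add: add_increasing)
  have "\<bar>mm (AS a) v - a t\<bar> \<le> 1/2^Lp t j + 1 / 2^(Lp t j - 0)"
    by (rule mm_pad[OF v hR qv_err]) auto
  also have "\<dots> = 1/2^(length t + j)" by (simp add: Lp_def)
  finally show ?thesis .
qed

lemma est_run: "parse a u = Run t i \<Longrightarrow> \<bar>mm (AS a) u - a t\<bar> \<le> 1/2^(length t + i)"
proof -
  assume u: "parse a u = Run t i"
  show ?thesis
  proof (rule mm_run[OF _ a0 a1 _ order_refl u])
    fix j v assume "i \<le> j" "parse a v = Pad t j 0"
    then have "\<bar>mm (AS a) v - a t\<bar> \<le> 1/2^(length t + j)" using est_pad0 by blast
    also have "\<dots> \<le> 1/2^(length t + i)" using \<open>i \<le> j\<close>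
      by (intro divide_left_mono power_increasing) auto
    finally show "\<bar>mm (AS a) v - a t\<bar> \<le> 1/2^(length t + i)" .
  qed simp
qed

lemma est_run_c: "parse a u = Run t i \<Longrightarrow> \<bar>mm (AS a) u - c\<bar> \<le> \<bar>a t - c\<bar> + 1/2^length t"
proof -
  assume u: "parse a u = Run t i"
  have "\<bar>mm (AS a) u - a t\<bar> \<le> 1/2^(length t + i)" by (rule est_run[OF u])
  also have "\<dots> \<le> 1/2^length t" by (intro divide_left_mono power_increasing) auto
  finally show ?thesis by linarith
qed

lemma est_pad_c: "parse a u = Pad t j k \<Longrightarrow>
    \<bar>mm (AS a) u - c\<bar> \<le> max \<bar>a t - c\<bar> \<bar>a (t@[j]) - c\<bar> + 1/2^length t"
proof -
  assume u: "parse a u = Pad t j k"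
  let ?B = "max \<bar>a t - c\<bar> \<bar>a (t@[j]) - c\<bar> + 1/2^length t"
  have hR: "\<bar>mm (AS a) v - c\<bar> \<le> ?B + 0" if v: "parse a v = Run (t@[j]) 0" for v
  proof -
    have "\<bar>mm (AS a) v - c\<bar> \<le> \<bar>a (t@[j]) - c\<bar> + 1/2^length (t@[j])" by (rule est_run_c[OF v])
    also have "1/2^length (t@[j]) \<le> (1::real)/2^length t"
      by (intro divide_left_mono power_increasing) auto
    finally show ?thesis by simp
  qed
  have hq: "\<bar>qv a t j - c\<bar> \<le> ?B"
  proof -
    have "1/2^Lp t j \<le> (1::real)/2^length t"
      by (intro divide_left_mono power_increasing) (auto simp: Lp_def)
    then show ?thesis using qv_err[of t j] by linarith
  qed
  show ?thesis using mm_pad[OF u hR hq] by simp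
qed

lemma off_persist: "parse a (pre z n) = Off p k \<Longrightarrow> \<exists>p'. parse a (pre z (n + d)) = Off p' (k - d)"
proof (induction d)
  case 0 then show ?case by simp
next
  case (Suc d)
  then obtain p' where p': "parse a (pre z (n + d)) = Off p' (k - d)" by auto
  show ?case
  proof (cases "k - d")
    case 0
    then show ?thesis using p' by (simp add: parse_pre_Suc)
  next
    case (Suc k')
    then have "k - Suc d = k'" by simp
    then show ?thesis using p' Suc by (simp add: parse_pre_Suc)
  qed
qed

lemma off0_persist: "parse a (pre z n) = Off p 0 \<Longrightarrow> parse a (pre z (n + d)) = Off p 0"
  by (induction d) (auto simp: parse_pre_Suc)

lemma has_density_eventually:
  assumes "\<And>m. n \<le> m \<Longrightarrow> mm A (pre z m) = q"
  shows "has_density A z q"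
  unfolding has_density_def dens_mm
  by (rule tendsto_eventually) (use assms in \<open>auto simp: eventually_sequentially\<close>)

lemma off0_density: "parse a (pre z n) = Off p 0 \<Longrightarrow> has_density (AS a) z p"
proof -
  assume h: "parse a (pre z n) = Off p 0"
  have "mm (AS a) (pre z m) = p" if "n \<le> m" for m
  proof -
    obtain d where "m = n + d" using \<open>n \<le> m\<close> le_Suc_ex by blast
    then have "parse a (pre z m) = Off p 0" using off0_persist[OF h] by simp
    then show ?thesis using mm_off by simp
  qed
  then show ?thesis by (rule has_density_eventually)
qed

lemma off_density:
  assumes "parse a (pre z n) = Off p k"
  shows "\<exists>q\<in>{0,1}. has_density (AS a) z q"
proof -
  obtain p' where p': "parse a (pre z (n + k)) = Off p' 0" using off_persist[OF assms, of k] by auto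
  have "p' \<le> 1" using good_parse[of "pre z (n+k)"] p' by simp
  then have "p' = 0 \<or> p' = 1" by linarith
  then show ?thesis using off0_density[OF p'] by auto
qed

end



lemma dens_fun: "dens_seq A z = (\<lambda>n. mm A (pre z n))"
  by (rule ext) (simp add: dens_mm)

fun ch :: "(nat \<Rightarrow> nat) \<Rightarrow> st \<Rightarrow> bool" where
  "ch x (Run t i) = (i = x (length t))" | "ch x _ = False"

primrec sq :: "(nat list \<Rightarrow> real) \<Rightarrow> (nat \<Rightarrow> nat) \<Rightarrow> nat \<Rightarrow> st" where
  "sq a x 0 = Init" | "sq a x (Suc n) = step a (sq a x n) (ch x (sq a x n))"

fun Gd :: "(nat \<Rightarrow> nat) \<Rightarrow> st \<Rightarrow> bool" where
  "Gd x Init = True"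
| "Gd x (Run t i) = (map x [0..<length t] = t \<and> i \<le> x (length t))"
| "Gd x (Pad t j k) = (map x [0..<length t] = t \<and> j = x (length t) \<and> k < Lp t j)"
| "Gd x (Off p k) = False"

locale cons2 = cons +
  assumes aconv: "\<And>x. convergent (\<lambda>m. a (map x [0..<m]))"
begin

abbreviation ss :: "(nat \<Rightarrow> bool) \<Rightarrow> nat \<Rightarrow> st" where "ss z n \<equiv> parse a (pre z n)"

lemma dg_mono:
  assumes nO: "\<And>n. \<not> isOff (ss z n)"
  shows "n \<le> m \<Longrightarrow> \<exists>w. dg (ss z m) = dg (ss z n) @ w"
proof (induction m rule: dec_induct)
  case base then show ?case by auto
next
  case (step q)
  obtain w where w: "dg (ss z q) = dg (ss z n) @ w" using step.IH by blast
  have "\<not> isOff (step a (ss z q) (z q))" using nO[of "Suc q"] by (simp add: parse_pre_Suc)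
  then obtain w' where "dg (step a (ss z q) (z q)) = dg (ss z q) @ w'" using dg_step by blast
  then have "dg (ss z (Suc q)) = dg (ss z n) @ (w @ w')" using w by (simp add: parse_pre_Suc)
  then show ?case by blast
qed

lemma pad_exit:
  assumes nO: "\<And>n. \<not> isOff (ss z n)" and p: "ss z n = Pad t j k"
  shows "\<exists>n'. ss z n' = Run (t@[j]) 0"
proof -
  have *: "\<forall>n k. Lp t j - k = Suc d \<longrightarrow> ss z n = Pad t j k \<longrightarrow> (\<exists>n'. ss z n' = Run (t@[j]) 0)" for d
  proof (induction d)
    case 0
    show ?case
    proof (intro allI impI)
      fix n k assume h: "Lp t j - k = Suc 0" "ss z n = Pad t j k"
      have zn: "\<not> z n" using nO[of "Suc n"] h(2) by (auto simp: parse_pre_Suc)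
      have "Suc k = Lp t j" using h(1) by simp
      then have "ss z (Suc n) = Run (t@[j]) 0" using h zn by (simp add: parse_pre_Suc)
      then show "\<exists>n'. ss z n' = Run (t@[j]) 0" by blast
    qed
  next
    case (Suc d)
    show ?case
    proof (intro allI impI)
      fix n k assume h: "Lp t j - k = Suc (Suc d)" "ss z n = Pad t j k"
      have zn: "\<not> z n" using nO[of "Suc n"] h(2) by (auto simp: parse_pre_Suc)
      have "Suc k \<noteq> Lp t j" using h(1) by simp
      then have "ss z (Suc n) = Pad t j (Suc k)" using h zn by (simp add: parse_pre_Suc)
      moreover have "Lp t j - Suc k = Suc d" using h(1) by simp
      ultimately show "\<exists>n'. ss z n' = Run (t@[j]) 0" using Suc.IH by blast
    qed
  qed
  have "k < Lp t j" using good_parse[of "pre z n"] p by simp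
  then have e: "Lp t j - k = Suc (Lp t j - k - 1)" by simp
  show ?thesis using *[of "Lp t j - k - 1"] e p by blast
qed

lemma not_Init: "0 < m \<Longrightarrow> ss z m \<noteq> Init"
proof -
  assume "0 < m"
  then obtain m' where "m = Suc m'" using gr0_conv_Suc by blast
  then show ?thesis by (simp add: parse_pre_Suc step_not_Init)
qed

lemma stable:
  assumes nO: "\<And>n. \<not> isOff (ss z n)" and bd: "\<And>n. length (dg (ss z n)) \<le> M"
  shows "\<exists>m0 t0 i0. \<forall>d. ss z (m0 + d) = Run t0 (i0 + d)"
proof -
  define l where "l n = length (dg (ss z n))" for n
  have "l n \<le> M" for n using bd[of n] unfolding l_def .
  then have "range l \<subseteq> {..M}" by auto
  then have fin: "finite (range l)" by (rule finite_subset) simp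
  obtain n0 where n0: "l n0 = Max (range l)" using Max_in[OF fin] by auto
  have lmax: "l n \<le> l n0" for n using Max_ge[OF fin] n0 by auto
  have stab: "dg (ss z m) = dg (ss z n0)" if le: "n0 \<le> m" for m
  proof -
    obtain w where w: "dg (ss z m) = dg (ss z n0) @ w" using dg_mono[OF nO le] by blast
    then have "l m = l n0 + length w" by (simp add: l_def)
    then have "w = []" using lmax[of m] by simp
    then show ?thesis using w by simp
  qed
  define m0 where "m0 = Suc n0"
  have isrun: "\<exists>i. ss z m = Run (dg (ss z n0)) i" if "m0 \<le> m" for m
  proof -
    have m_pos: "ss z m \<noteq> Init" using not_Init that m0_def by simp
    have notoff: "\<not> isOff (ss z m)" by (rule nO)
    have notpad: "\<not> (\<exists>t j k. ss z m = Pad t j k)"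
    proof
      assume "\<exists>t j k. ss z m = Pad t j k"
      then obtain t j k where p: "ss z m = Pad t j k" by blast
      obtain n' where n': "ss z n' = Run (t@[j]) 0" using pad_exit[OF nO p] by blast
      have dgm: "dg (ss z m) = t" using p by simp
      show False
      proof (cases "n' \<le> m")
        case True
        obtain w where "dg (ss z m) = dg (ss z n') @ w" using dg_mono[OF nO True] by blast
        then show False using dgm n' by simp
      next
        case False
        then have "n0 \<le> n'" using that m0_def by simp
        then have "dg (ss z n') = dg (ss z n0)" by (rule stab)
        moreover have "dg (ss z m) = dg (ss z n0)" using that m0_def by (intro stab) simp
        ultimately show False using dgm n' by simp
      qed
    qed
    have "dg (ss z m) = dg (ss z n0)" using that m0_def by (intro stab) simp
    then show ?thesis using m_pos notoff notpad by (cases "ss z m") auto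
  qed
  obtain i0 where i0: "ss z m0 = Run (dg (ss z n0)) i0" using isrun[of m0] by auto
  have "ss z (m0 + d) = Run (dg (ss z n0)) (i0 + d)" for d
  proof (induction d)
    case 0 then show ?case using i0 by simp
  next
    case (Suc d)
    obtain i where i: "ss z (Suc (m0 + d)) = Run (dg (ss z n0)) i" using isrun[of "Suc (m0+d)"] by auto
    have "ss z (Suc (m0 + d)) = step a (Run (dg (ss z n0)) (i0 + d)) (z (m0 + d))"
      using Suc by (simp add: parse_pre_Suc)
    then show ?case using i by (auto split: if_splits)
  qed
  then show ?thesis by blast
qed

lemma stable_density:
  assumes h: "\<And>d. ss z (m0 + d) = Run t0 (i0 + d)"
  shows "has_density (AS a) z (a t0)"
proof -
  have b: "\<bar>mm (AS a) (pre z (d + m0)) - a t0\<bar> \<le> (1/2)^d" for d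
  proof -
    have "\<bar>mm (AS a) (pre z (m0 + d)) - a t0\<bar> \<le> 1/2^(length t0 + (i0 + d))"
      by (rule est_run[OF h[of d]])
    then have "\<bar>mm (AS a) (pre z (d + m0)) - a t0\<bar> \<le> 1/2^(length t0 + (i0 + d))"
      by (simp only: add.commute)
    also have "\<dots> \<le> 1/2^d" by (intro divide_left_mono power_increasing) auto
    finally show ?thesis by (simp add: power_one_over)
  qed
  have ev: "eventually (\<lambda>d. norm (mm (AS a) (pre z (d + m0)) - a t0) \<le> (1/2)^d) sequentially"
    using b by (auto intro!: always_eventually)
  have g0: "(\<lambda>d. (1/2::real)^d) \<longlonglongrightarrow> 0" by (rule LIMSEQ_realpow_zero) auto
  have "(\<lambda>d. mm (AS a) (pre z (d + m0)) - a t0) \<longlonglongrightarrow> 0" by (rule Lim_null_comparison[OF ev g0])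
  then have "(\<lambda>d. mm (AS a) (pre z (d + m0))) \<longlonglongrightarrow> a t0" by (rule LIM_zero_cancel)
  then have "(\<lambda>n. mm (AS a) (pre z n)) \<longlonglongrightarrow> a t0" by (rule LIMSEQ_offset)
  then show ?thesis unfolding has_density_def dens_fun .
qed

lemma path_density:
  assumes nO: "\<And>n. \<not> isOff (ss z n)"
    and pfx: "\<And>n. map x [0..<length (dg (ss z n))] = dg (ss z n)"
    and unb: "\<And>M. \<exists>n. M \<le> length (dg (ss z n))"
    and conv: "(\<lambda>m. a (map x [0..<m])) \<longlonglongrightarrow> c"
  shows "has_density (AS a) z c"
proof -
  define l where "l n = length (dg (ss z n))" for n
  define g where "g m = \<bar>a (map x [0..<m]) - c\<bar> + (1/2)^m" for m
  have g0: "g \<longlonglongrightarrow> 0"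
  proof -
    have "(\<lambda>m. a (map x [0..<m]) - c) \<longlonglongrightarrow> 0" using conv by (rule LIM_zero)
    then have "(\<lambda>m. \<bar>a (map x [0..<m]) - c\<bar>) \<longlonglongrightarrow> 0" by (rule tendsto_rabs_zero)
    moreover have "(\<lambda>m. (1/2::real)^m) \<longlonglongrightarrow> 0" by (rule LIMSEQ_realpow_zero) auto
    ultimately have "(\<lambda>m. \<bar>a (map x [0..<m]) - c\<bar> + (1/2::real)^m) \<longlonglongrightarrow> 0 + 0"
      by (rule tendsto_add)
    then show ?thesis unfolding g_def[abs_def] by simp
  qed
  have lmono: "l n \<le> l m" if "n \<le> m" for n m using dg_mono[OF nO that] by (auto simp: l_def)
  have ltop: "filterlim l at_top sequentially"
  proof (subst filterlim_at_top, intro allI)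
    fix M
    obtain n where n: "M \<le> l n" using unb by (auto simp: l_def)
    show "eventually (\<lambda>m. M \<le> l m) sequentially"
      unfolding eventually_sequentially using lmono n order_trans by blast
  qed
  have ltop1: "filterlim (\<lambda>n. Suc (l n)) at_top sequentially"
    by (rule filterlim_compose[OF filterlim_Suc ltop])
  have G1: "(\<lambda>n. g (l n)) \<longlonglongrightarrow> 0" by (rule filterlim_compose[OF g0 ltop])
  have G2: "(\<lambda>n. g (Suc (l n))) \<longlonglongrightarrow> 0" by (rule filterlim_compose[OF g0 ltop1])
  have G3: "(\<lambda>n. g (l n) + g (Suc (l n))) \<longlonglongrightarrow> 0"
    using tendsto_add[OF G1 G2] by simp
  have G0: "(\<lambda>n. 2 * (g (l n) + g (Suc (l n)))) \<longlonglongrightarrow> 0"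
    by (rule tendsto_mult_right_zero[OF G3])
  have gnn: "0 \<le> g m" for m by (simp add: g_def)
  have bound: "\<bar>mm (AS a) (pre z n) - c\<bar> \<le> 2 * (g (l n) + g (Suc (l n)))" if "1 \<le> n" for n
  proof -
    have ni: "ss z n \<noteq> Init" using not_Init that by simp
    consider (R) t i where "ss z n = Run t i" | (P) t j k where "ss z n = Pad t j k"
      using nO[of n] ni by (cases "ss z n") auto
    then show ?thesis
    proof cases
      case R
      have t: "map x [0..<l n] = t" "length t = l n" using pfx[of n] R by (simp_all add: l_def)
      have "\<bar>mm (AS a) (pre z n) - c\<bar> \<le> \<bar>a t - c\<bar> + 1/2^length t" by (rule est_run_c[OF R])
      also have "\<dots> = g (l n)" using t by (simp add: g_def power_one_over)
      finally have h: "\<bar>mm (AS a) (pre z n) - c\<bar> \<le> g (l n)" .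
      moreover have "g (l n) \<le> 2 * (g (l n) + g (Suc (l n)))" using gnn[of "l n"] gnn[of "Suc (l n)"] by simp
      ultimately show ?thesis by (rule order_trans)
    next
      case P
      have t: "map x [0..<l n] = t" "length t = l n" using pfx[of n] P by (simp_all add: l_def)
      obtain n' where n': "ss z n' = Run (t@[j]) 0" using pad_exit[OF nO P] by blast
      have tj: "map x [0..<Suc (l n)] = t @ [j]" using pfx[of n'] n' t by simp
      have "\<bar>mm (AS a) (pre z n) - c\<bar> \<le> max \<bar>a t - c\<bar> \<bar>a (t@[j]) - c\<bar> + 1/2^length t"
        by (rule est_pad_c[OF P])
      also have "\<dots> \<le> \<bar>a t - c\<bar> + \<bar>a (t@[j]) - c\<bar> + (1/2)^(l n)"
        using t by (simp add: power_one_over)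
      also have "\<dots> \<le> 2 * (g (l n) + g (Suc (l n)))"
      proof -
        have "g (l n) = \<bar>a t - c\<bar> + (1/2)^(l n)" using t by (simp add: g_def)
        moreover have "g (Suc (l n)) = \<bar>a (t@[j]) - c\<bar> + (1/2)^(Suc (l n))" using tj by (simp add: g_def)
        moreover have "(0::real) \<le> (1/2)^(l n)" by simp
        ultimately show ?thesis by simp
      qed
      finally show ?thesis .
    qed
  qed
  have ev: "eventually (\<lambda>n. norm (mm (AS a) (pre z n) - c) \<le> 2 * (g (l n) + g (Suc (l n)))) sequentially"
    unfolding eventually_sequentially using bound by auto
  have "(\<lambda>n. mm (AS a) (pre z n) - c) \<longlonglongrightarrow> 0" by (rule Lim_null_comparison[OF ev G0])
  then show ?thesis unfolding has_density_def dens_fun by (rule LIM_zero_cancel)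
qed

lemma all_dens: "\<exists>d. has_density (AS a) z d \<and>
    (d \<in> {0,1} \<or> (\<exists>t. d = a t) \<or> (\<exists>x. d = lim (\<lambda>m. a (map x [0..<m]))))"
proof (cases "\<exists>n. isOff (ss z n)")
  case True
  then obtain n p k where "ss z n = Off p k" by (metis isOff.elims(2))
  then show ?thesis using off_density by blast
next
  case False
  then have nO: "\<And>n. \<not> isOff (ss z n)" by blast
  show ?thesis
  proof (cases "\<exists>M. \<forall>n. length (dg (ss z n)) \<le> M")
    case True
    then obtain M where "\<And>n. length (dg (ss z n)) \<le> M" by blast
    from stable[OF nO this] obtain m0 t0 i0 where "\<forall>d. ss z (m0+d) = Run t0 (i0+d)" by blast
    then have "has_density (AS a) z (a t0)" using stable_density by blast
    then show ?thesis by blast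
  next
    case False
    have unb: "\<exists>n. M \<le> length (dg (ss z n))" for M
    proof -
      obtain n where "\<not> length (dg (ss z n)) \<le> M" using False by blast
      then show ?thesis by (intro exI[of _ n]) simp
    qed
    define x where "x i = dg (ss z (SOME n. i < length (dg (ss z n)))) ! i" for i
    have comp: "\<exists>w. dg (ss z m) = dg (ss z n) @ w \<or> dg (ss z n) = dg (ss z m) @ w" for n m
      using dg_mono[OF nO, of n m] dg_mono[OF nO, of m n] nat_le_linear by blast
    have nth_x: "dg (ss z n) ! i = x i" if "i < length (dg (ss z n))" for n i
    proof -
      let ?n = "SOME n. i < length (dg (ss z n))"
      have i2: "i < length (dg (ss z ?n))" using that by (rule someI)
      obtain w where "dg (ss z ?n) = dg (ss z n) @ w \<or> dg (ss z n) = dg (ss z ?n) @ w"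
        using comp by blast
      then show ?thesis using that i2 unfolding x_def by (auto simp: nth_append)
    qed
    have pfx: "map x [0..<length (dg (ss z n))] = dg (ss z n)" for n
      by (rule nth_equalityI) (auto simp: nth_x)
    have "has_density (AS a) z (lim (\<lambda>m. a (map x [0..<m])))"
      by (rule path_density[OF nO pfx unb]) (use aconv convergent_LIMSEQ_iff in blast)
    then show ?thesis by blast
  qed
qed

lemma parse_sq: "ss (\<lambda>n. ch x (sq a x n)) n = sq a x n"
  by (induction n) (simp_all add: parse_pre_Suc pre_def parse_def)

lemma Gd_sq: "Gd x (sq a x n)"
proof (induction n)
  case 0 show ?case by simp
next
  case (Suc n) then show ?case
    by (cases "sq a x n") (auto simp: Lp_def)
qed

lemma sq_density: "has_density (AS a) (\<lambda>n. ch x (sq a x n)) (lim (\<lambda>m. a (map x [0..<m])))"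
proof -
  let ?z = "\<lambda>n. ch x (sq a x n)"
  have nO: "\<not> isOff (ss ?z n)" for n
    using Gd_sq[of x n] unfolding parse_sq by (cases "sq a x n") auto
  have pfx: "map x [0..<length (dg (ss ?z n))] = dg (ss ?z n)" for n
    using Gd_sq[of x n] unfolding parse_sq by (cases "sq a x n") auto
  have unb: "\<exists>n. M \<le> length (dg (ss ?z n))" for M
  proof (rule ccontr)
    assume "\<not> ?thesis"
    then have "\<And>n. length (dg (ss ?z n)) \<le> M" by (metis less_imp_le not_le)
    from stable[OF nO this] obtain m0 t0 i0 where h: "\<forall>d. ss ?z (m0+d) = Run t0 (i0+d)" by blast
    have "Gd x (Run t0 (i0 + (x (length t0) + 1)))"
      using Gd_sq[of x "m0 + (x (length t0) + 1)"] h parse_sq by metis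
    then show False by simp
  qed
  show ?thesis
    by (rule path_density[OF nO pfx unb]) (use aconv convergent_LIMSEQ_iff in blast)
qed

lemma dens_one: "has_density (AS a) (\<lambda>n. n = 0) 1"
proof -
  have "ss (\<lambda>n. n = 0) (Suc (Suc 0)) = Off 1 0"
    by (simp add: parse_pre_Suc pre_def parse_def)
  from off0_density[OF this] show ?thesis by simp
qed

lemma dens_zero: "has_density (AS a) (\<lambda>n. True) 0"
proof -
  have "ss (\<lambda>n. True) (Suc (Suc 0)) = Off 0 0"
    by (simp add: parse_pre_Suc pre_def parse_def)
  from off0_density[OF this] show ?thesis by simp
qed

end

definition ext :: "nat list \<Rightarrow> nat \<Rightarrow> nat" where
  "ext t i = (if i < length t then t!i else 0)"

lemma ext_conv: "(\<lambda>m. ext (map x [0..<m])) \<longlonglongrightarrow> x"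
proof -
  have "limitin (product_topology (\<lambda>i. euclidean) UNIV) (\<lambda>m. ext (map x [0..<m])) x sequentially"
    unfolding limitin_componentwise
  proof (intro conjI ballI)
    show "x \<in> extensional UNIV" by simp
    show "eventually (\<lambda>m. ext (map x [0..<m]) \<in> topspace (product_topology (\<lambda>i. euclidean) UNIV)) sequentially"
      by (simp add: PiE_iff)
    fix i :: nat
    show "limitin euclidean (\<lambda>m. ext (map x [0..<m]) i) (x i) sequentially"
      unfolding limitin_canonical_iff
      by (rule tendsto_eventually) (auto simp: eventually_sequentially ext_def intro!: exI[of _ "Suc i"])
  qed
  then show ?thesis by (simp add: euclidean_product_topology)
qed

lemma main_open:
  fixes f :: "(nat \<Rightarrow> nat) \<Rightarrow> real"
  assumes fc: "continuous_on UNIV f" and f0: "\<And>y. 0 \<le> f y" and f1: "\<And>y. f y \<le> 1"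
  shows "\<exists>A. openin cantor_top A \<and> A \<in> sets coin \<and> solid A \<and> ran_density A = {0,1} \<union> range f"
proof -
  define a where "a t = f (ext t)" for t
  have conv: "(\<lambda>m. a (map x [0..<m])) \<longlonglongrightarrow> f x" for x
    unfolding a_def by (rule continuous_on_tendsto_compose[OF fc ext_conv]) auto
  interpret C: cons2 a
    apply unfold_locales
      apply (simp add: a_def f0)
     apply (simp add: a_def f1)
    by (rule convergentI[OF conv])
  have limv: "lim (\<lambda>m. a (map x [0..<m])) = f x" for x using conv limI by blast
  have dens_ex: "\<exists>d. has_density (AS a) z d \<and> d \<in> {0,1} \<union> range f" for z
  proof -
    obtain d where d: "has_density (AS a) z d"
      "d \<in> {0,1} \<or> (\<exists>t. d = a t) \<or> (\<exists>x. d = lim (\<lambda>m. a (map x [0..<m])))"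
      using C.all_dens[of z] by blast
    have "d \<in> {0,1} \<union> range f" using d(2) limv by (auto simp: a_def)
    then show ?thesis using d(1) by blast
  qed
  have uniq: "has_density A z d \<Longrightarrow> has_density A z d' \<Longrightarrow> d = d'" for A z d d'
    unfolding has_density_def using LIMSEQ_unique by blast
  show ?thesis
  proof (intro exI conjI)
    show "openin cantor_top (AS a)" by (rule AS_open)
    show "AS a \<in> sets coin" by (rule AS_sets)
    show "solid (AS a)" unfolding solid_def blurry_def using dens_ex by blast
    show "ran_density (AS a) = {0,1} \<union> range f"
    proof
      show "ran_density (AS a) \<subseteq> {0,1} \<union> range f"
      proof
        fix d assume "d \<in> ran_density (AS a)"
        then obtain z where z: "has_density (AS a) z d" by (auto simp: ran_density_def)
        obtain d' where "has_density (AS a) z d'" "d' \<in> {0,1} \<union> range f" using dens_ex by blast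
        then show "d \<in> {0,1} \<union> range f" using uniq[OF z] by auto
      qed
      show "{0,1} \<union> range f \<subseteq> ran_density (AS a)"
      proof
        fix d assume "d \<in> {0,1} \<union> range f"
        then consider "d = 0" | "d = 1" | y where "d = f y" by auto
        then show "d \<in> ran_density (AS a)"
        proof cases
          case 1 then show ?thesis using C.dens_zero by (auto simp: ran_density_def)
        next
          case 2 then show ?thesis using C.dens_one by (auto simp: ran_density_def)
        next
          case 3 then show ?thesis using C.sq_density[of y] limv[of y] by (auto simp: ran_density_def)
        qed
      qed
    qed
  qed
qed



lemma hd_ev:
  assumes "\<And>m. n \<le> m \<Longrightarrow> mm A (pre z m) = q"
  shows "has_density A z q"
  unfolding has_density_def dens_fun
  by (rule tendsto_eventually) (use assms in \<open>auto simp: eventually_sequentially\<close>)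

lemma main_empty: "\<exists>A. openin cantor_top A \<and> A \<in> sets coin \<and> solid A \<and> ran_density A = {0,1}"
proof -
  let ?A = "cylL [True]"
  have c0: "x 0 = z 0" if "x \<in> cylL (pre z m)" "1 \<le> m" for x z m
    using that unfolding cylL_def by (auto dest: spec[of _ 0])
  have d1: "has_density ?A z 1" if "z 0" for z
  proof (rule hd_ev[of 1])
    fix m :: nat assume m: "1 \<le> m"
    have "cylL (pre z m) \<subseteq> ?A" using c0[OF _ m] that by (auto simp: cylL_def)
    then show "mm ?A (pre z m) = 1" by (rule mm_full)
  qed
  have d0: "has_density ?A z 0" if "\<not> z 0" for z
  proof (rule hd_ev[of 1])
    fix m :: nat assume m: "1 \<le> m"
    have "?A \<inter> cylL (pre z m) = {}" using c0[OF _ m] that by (auto simp: cylL_def)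
    then show "mm ?A (pre z m) = 0" by (rule mm_empty)
  qed
  have uniq: "has_density A z d \<Longrightarrow> has_density A z d' \<Longrightarrow> d = d'" for A z d d'
    unfolding has_density_def using LIMSEQ_unique by blast
  have dens_ex: "\<exists>d. has_density ?A z d \<and> d \<in> {0,1}" for z
  proof (cases "z 0")
    case True then show ?thesis using d1[of z] by blast
  next
    case False then show ?thesis using d0[of z] by blast
  qed
  show ?thesis
  proof (intro exI conjI)
    show "openin cantor_top ?A" by (rule open_cylL)
    show "?A \<in> sets coin" by (rule cylL_sets)
    show "solid ?A" unfolding solid_def blurry_def using dens_ex by blast
    show "ran_density ?A = {0,1}"
    proof
      show "ran_density ?A \<subseteq> {0,1}"
      proof
        fix d assume "d \<in> ran_density ?A"
        then obtain z where z: "has_density ?A z d" by (auto simp: ran_density_def)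
        obtain d' where "has_density ?A z d'" "d' \<in> {0,1}" using dens_ex by blast
        then show "d \<in> {0,1}" using uniq[OF z] by auto
      qed
      show "{0,1} \<subseteq> ran_density ?A"
        using d0[of "\<lambda>_. False"] d1[of "\<lambda>_. True"] by (auto simp: ran_density_def)
    qed
  qed
qed

lemma dens_compl:
  assumes "A \<in> sets coin"
  shows "dens_seq (- A) z n = 1 - dens_seq A z n"
proof -
  have e: "(- A) \<inter> cyl z n = cyl z n - (A \<inter> cyl z n)" by auto
  have cs: "cyl z n \<in> sets coin" by (simp add: cyl_eq)
  have "measure coin ((- A) \<inter> cyl z n) = measure coin (cyl z n) - measure coin (A \<inter> cyl z n)"
    unfolding e using assms cs by (intro coinPS.finite_measure_Diff) auto
  moreover have "measure coin (cyl z n) > 0" by (simp add: cyl_eq measure_cylL)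
  ultimately show ?thesis unfolding dens_seq_def by (simp add: diff_divide_distrib)
qed

lemma hd_compl:
  assumes "A \<in> sets coin"
  shows "has_density (- A) z d \<longleftrightarrow> has_density A z (1 - d)"
proof -
  have e: "dens_seq (- A) z = (\<lambda>n. 1 - dens_seq A z n)" by (rule ext) (rule dens_compl[OF assms])
  show ?thesis
  proof
    assume "has_density (- A) z d"
    then have "(\<lambda>n. 1 - dens_seq A z n) \<longlonglongrightarrow> d" unfolding has_density_def e .
    then have "(\<lambda>n. 1 - (1 - dens_seq A z n)) \<longlonglongrightarrow> 1 - d" by (intro tendsto_diff tendsto_const)
    then show "has_density A z (1 - d)" unfolding has_density_def by simp
  next
    assume "has_density A z (1 - d)"
    then have "dens_seq A z \<longlonglongrightarrow> 1 - d" unfolding has_density_def .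
    then have "(\<lambda>n. 1 - dens_seq A z n) \<longlonglongrightarrow> 1 - (1 - d)" by (intro tendsto_diff tendsto_const)
    then show "has_density (- A) z d" unfolding has_density_def e by simp
  qed
qed

lemma key:
  assumes an: "S = {} \<or> (\<exists>f :: (nat \<Rightarrow> nat) \<Rightarrow> real. continuous_on UNIV f \<and> range f = S)"
    and S01: "S \<subseteq> {0..1}"
  shows "\<exists>A. openin cantor_top A \<and> A \<in> sets coin \<and> solid A \<and> ran_density A = {0,1} \<union> S"
proof (cases "S = {}")
  case True
  then show ?thesis using main_empty by simp
next
  case False
  then obtain f :: "(nat \<Rightarrow> nat) \<Rightarrow> real" where f: "continuous_on UNIV f" "range f = S" using an by blast
  have fy: "f y \<in> {0..1}" for y using f(2) S01 by blast
  have f0: "0 \<le> f y" and f1: "f y \<le> 1" for y using fy[of y] by auto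
  show ?thesis using main_open[OF f(1) f0 f1] f(2) by simp
qed

theorem theorem5p1:
  fixes S :: "real set"
  assumes "analytic_real S" and "S \<subseteq> {0<..<1}"
  shows "(\<exists>A. closedin cantor_top A \<and> solid A \<and> ran_density A = {0, 1} \<union> S)
       \<and> (\<exists>A'. openin cantor_top A' \<and> solid A' \<and> ran_density A' = {0, 1} \<union> S)"
proof -
  have an: "S = {} \<or> (\<exists>f :: (nat \<Rightarrow> nat) \<Rightarrow> real. continuous_on UNIV f \<and> range f = S)"
    using assms(1) unfolding analytic_real_def .
  have S01: "S \<subseteq> {0..1}" using assms(2) by auto
  define S' where "S' = (\<lambda>s. 1 - s) ` S"
  have an': "S' = {} \<or> (\<exists>f :: (nat \<Rightarrow> nat) \<Rightarrow> real. continuous_on UNIV f \<and> range f = S')"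
  proof (cases "S = {}")
    case True then show ?thesis by (simp add: S'_def)
  next
    case False
    then obtain f :: "(nat \<Rightarrow> nat) \<Rightarrow> real" where f: "continuous_on UNIV f" "range f = S" using an by blast
    have "continuous_on UNIV (\<lambda>y. 1 - f y)" by (intro continuous_on_diff continuous_on_const f(1))
    moreover have "range (\<lambda>y. 1 - f y) = S'" unfolding S'_def f(2)[symmetric] by (simp add: image_image)
    ultimately show ?thesis by blast
  qed
  have S'01: "S' \<subseteq> {0..1}" using S01 by (auto simp: S'_def)
  obtain A where A: "openin cantor_top A" "solid A" "ran_density A = {0,1} \<union> S"
    using key[OF an S01] by blast
  obtain B where B: "openin cantor_top B" "B \<in> sets coin" "solid B" "ran_density B = {0,1} \<union> S'"
    using key[OF an' S'01] by blast
  have cl: "closedin cantor_top (- B)" using B(1) by (simp add: closedin_def)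
  have sol: "solid (- B)"
    unfolding solid_def blurry_def
  proof
    fix z
    obtain d where "has_density B z d" using B(3) unfolding solid_def blurry_def by blast
    then have "has_density (- B) z (1 - d)" using hd_compl[OF B(2)] by simp
    then show "\<not> \<not> (\<exists>d. has_density (- B) z d)" by blast
  qed
  have ran: "ran_density (- B) = {0,1} \<union> S"
  proof (rule set_eqI)
    fix d
    have "d \<in> ran_density (- B) \<longleftrightarrow> 1 - d \<in> ran_density B"
      by (simp add: ran_density_def hd_compl[OF B(2)])
    also have "\<dots> \<longleftrightarrow> d \<in> {0,1} \<union> S"
    proof -
      have "1 - d \<in> S' \<longleftrightarrow> d \<in> S" unfolding S'_def by force
      then show ?thesis using B(4) by auto
    qed
    finally show "d \<in> ran_density (- B) \<longleftrightarrow> d \<in> {0,1} \<union> S" .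
  qed
  show ?thesis using A cl sol ran by blast
qed


end
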